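(* Let $T$ be an infinite periodic tree. Then either $\mathrm{br}(T)>1$, or there exists an integer $d\ge1$ such that $|B(n)|/n^d$ is bounded away from $0$ and $\infty$ (for $n\ge1$).
   Context: $T$ is an infinite locally finite tree rooted at $o$; $|x|$ is the distance from $o$ to $x$, $T^x$ the subtree of descendants of $x$ rooted at $x$, $B(n)=\{x:|x|\le n\}$. For an edge $e=(e^-,e^+)$ with $|e^+|=|e^-|+1$ set $|e|=|e^+|$. A cutset is a set of edges meeting every infinite path from $o$; $\Pi(T)$ is the set of cutsets. The branching number is $\mathrm{br}(T)=\sup\{\lambda>0:\inf_{\pi\in\Pi(T)}\sum_{e\in\pi}\lambda^{-|e|}>0\}$. For an integer $N\ge0$, $T$ is $N$-periodic if for every vertex $x$ there is an adjacency-preserving bijection $f:T^x\to T^{f(x)}$ with $|f(x)|\le N$; $T$ is periodic if it is $N$-periodic for some $N$. *)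

theory Defs
  imports Complex_Main "HOL-Library.Extended_Real" "HOL-Library.Extended_Nonnegative_Real"
begin

text \<open>Rooted trees in Ulam--Harris form: a vertex is a finite list of natural numbers,
  the root o is the empty list, the parent of x @ [i] is x.  Every countable rooted
  tree (in particular every locally finite one) is isomorphic to such a tree.\<close>

type_synonym vert = "nat list"

definition rooted_tree :: "vert set \<Rightarrow> bool" where
  "rooted_tree T \<longleftrightarrow> [] \<in> T \<and> (\<forall>x i. x @ [i] \<in> T \<longrightarrow> x \<in> T)"

definition locally_finite :: "vert set \<Rightarrow> bool" where
  "locally_finite T \<longleftrightarrow> (\<forall>x\<in>T. finite {i. x @ [i] \<in> T})"

definition adj :: "vert set \<Rightarrow> vert \<Rightarrow> vert \<Rightarrow> bool" where
  "adj T u v \<longleftrightarrow> u \<in> T \<and> v \<in> T \<and> ((\<exists>i. v = u @ [i]) \<or> (\<exists>i. u = v @ [i]))"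

definition subtree :: "vert set \<Rightarrow> vert \<Rightarrow> vert set" where
  "subtree T x = {y \<in> T. \<exists>z. y = x @ z}"

definition ball :: "vert set \<Rightarrow> nat \<Rightarrow> vert set" where
  "ball T n = {x \<in> T. length x \<le> n}"

definition periodicN :: "vert set \<Rightarrow> nat \<Rightarrow> bool" where
  "periodicN T N \<longleftrightarrow> (\<forall>x\<in>T. \<exists>f. f x \<in> T \<and> length (f x) \<le> N \<and>
      bij_betw f (subtree T x) (subtree T (f x)) \<and>
      (\<forall>u\<in>subtree T x. \<forall>v\<in>subtree T x. adj T u v \<longrightarrow> adj T (f u) (f v)))"

definition periodic :: "vert set \<Rightarrow> bool" where
  "periodic T \<longleftrightarrow> (\<exists>N. periodicN T N)"

text \<open>Edges e = (e-, e+) directed away from the root; |e| = |e+|.\<close>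
definition edges :: "vert set \<Rightarrow> (vert \<times> vert) set" where
  "edges T = {(u, u @ [i]) | u i. u @ [i] \<in> T}"

definition ray :: "vert set \<Rightarrow> (nat \<Rightarrow> vert) \<Rightarrow> bool" where
  "ray T p \<longleftrightarrow> p 0 = [] \<and> (\<forall>n. p (Suc n) \<in> T \<and> (\<exists>i. p (Suc n) = p n @ [i]))"

definition cutsets :: "vert set \<Rightarrow> (vert \<times> vert) set set" where
  "cutsets T = {\<pi>. \<pi> \<subseteq> edges T \<and> (\<forall>p. ray T p \<longrightarrow> (\<exists>n. (p n, p (Suc n)) \<in> \<pi>))}"

definition cutsum :: "real \<Rightarrow> (vert \<times> vert) set \<Rightarrow> ennreal" where
  "cutsum lam \<pi> = (SUP F\<in>{F. finite F \<and> F \<subseteq> \<pi>}. \<Sum>e\<in>F. ennreal (lam powr (- real (length (snd e)))))"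

definition branching_number :: "vert set \<Rightarrow> ereal" where
  "branching_number T = Sup {ereal lam | lam. lam > 0 \<and> (INF \<pi>\<in>cutsets T. cutsum lam \<pi>) > 0}"

end

theory Submission
  imports Defs "HOL-Library.Sublist"
begin


lemma rooted_prefix: assumes "rooted_tree T" "y \<in> T" "prefix x y" shows "x \<in> T"
proof -
  obtain z where "y = x @ z" using assms(3) prefix_def by auto
  with assms(2) show ?thesis
  proof (induction z arbitrary: y rule: rev_induct)
    case Nil then show ?case by simp
  next
    case (snoc a z)
    then have "(x @ z) @ [a] \<in> T" by simp
    then have "x @ z \<in> T" using assms(1) unfolding rooted_tree_def by blast
    then show ?case using snoc.IH by simp
  qed
qed

lemma subtree_alt: "subtree T x = {y\<in>T. prefix x y}"
  by (auto simp: subtree_def prefix_def)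

lemma finite_ball: assumes "rooted_tree T" "locally_finite T" shows "finite (ball T n)"
proof (induction n)
  case 0
  have "ball T 0 \<subseteq> {[]}" by (auto simp: ball_def)
  then show ?case using finite_subset by blast
next
  case (Suc n)
  have "ball T (Suc n) \<subseteq> ball T n \<union> (\<Union>x\<in>ball T n. (\<lambda>i. x @ [i]) ` {i. x @ [i] \<in> T})"
  proof
    fix y assume y: "y \<in> ball T (Suc n)"
    show "y \<in> ball T n \<union> (\<Union>x\<in>ball T n. (\<lambda>i. x @ [i]) ` {i. x @ [i] \<in> T})"
    proof (cases "length y \<le> n")
      case True then show ?thesis using y by (auto simp: ball_def)
    next
      case False
      then have "y \<noteq> []" by auto
      then obtain x i where yx: "y = x @ [i]" by (metis rev_exhaust)
      then have "x \<in> T" using y assms(1) by (auto simp: ball_def rooted_tree_def)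
      then show ?thesis using y yx False by (auto simp: ball_def)
    qed
  qed
  moreover have "finite (\<Union>x\<in>ball T n. (\<lambda>i. x @ [i]) ` {i. x @ [i] \<in> T})"
    using Suc assms(2) by (auto simp: locally_finite_def ball_def)
  ultimately show ?case using Suc by (meson finite_UnI finite_subset)
qed

definition Fc :: "vert set \<Rightarrow> vert \<Rightarrow> nat \<Rightarrow> vert set" where
  "Fc T x n = {v \<in> subtree T x. length v \<le> length x + n}"

lemma finite_Fc: assumes "rooted_tree T" "locally_finite T" shows "finite (Fc T x n)"
proof -
  have "Fc T x n \<subseteq> ball T (length x + n)" by (auto simp: Fc_def ball_def subtree_def)
  then show ?thesis using finite_ball[OF assms] finite_subset by blast
qed

definition isoT :: "vert set \<Rightarrow> vert \<Rightarrow> vert \<Rightarrow> (vert \<Rightarrow> vert) \<Rightarrow> bool" where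
  "isoT T x y \<phi> \<longleftrightarrow> bij_betw \<phi> (subtree T x) (subtree T y) \<and> \<phi> x = y \<and>
    (\<forall>u\<in>subtree T x. \<forall>i. u @ [i] \<in> T \<longrightarrow> (\<exists>j. \<phi> (u @ [i]) = \<phi> u @ [j]))"

definition iso :: "vert set \<Rightarrow> vert \<Rightarrow> vert \<Rightarrow> bool" where
  "iso T x y \<longleftrightarrow> x \<in> T \<and> (\<exists>\<phi>. isoT T x y \<phi>)"

lemma isoT_len:
  assumes R: "rooted_tree T" and I: "isoT T x y \<phi>" and u: "u \<in> subtree T x"
  shows "\<phi> u \<in> subtree T y \<and> length (\<phi> u) + length x = length u + length y"
proof -
  obtain z where uz: "u = x @ z" and uT: "u \<in> T" using u by (auto simp: subtree_def)
  have bij: "bij_betw \<phi> (subtree T x) (subtree T y)" using I by (simp add: isoT_def)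
  from uT uz show ?thesis
  proof (induction z arbitrary: u rule: rev_induct)
    case Nil
    have "x \<in> subtree T x" using Nil by (auto simp: subtree_def)
    then show ?case using I bij_betw_apply[OF bij] Nil by (auto simp: isoT_def)
  next
    case (snoc a z)
    have xz: "x @ z \<in> T" using snoc.prems R unfolding rooted_tree_def by (metis append_assoc)
    have IH: "length (\<phi> (x@z)) + length x = length (x@z) + length y" using snoc.IH[OF xz] by simp
    have xzs: "x @ z \<in> subtree T x" using xz by (auto simp: subtree_def)
    have "(x @ z) @ [a] \<in> T" using snoc.prems by simp
    then obtain j where "\<phi> ((x @ z) @ [a]) = \<phi> (x@z) @ [j]"
      using I xzs unfolding isoT_def by blast
    moreover have "\<phi> u \<in> subtree T y" using bij snoc.prems by (auto simp: bij_betw_def subtree_def)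
    ultimately show ?case using IH snoc.prems by simp
  qed
qed

lemma isoT_prefix:
  assumes R: "rooted_tree T" and I: "isoT T x y \<phi>" and u: "u \<in> subtree T x"
    and w: "w \<in> T" and p: "prefix u w"
  shows "prefix (\<phi> u) (\<phi> w)"
proof -
  obtain z where wz: "w = u @ z" using p prefix_def by auto
  from w wz show ?thesis
  proof (induction z arbitrary: w rule: rev_induct)
    case Nil then show ?case by simp
  next
    case (snoc a z)
    have uz: "u @ z \<in> T" using snoc.prems R unfolding rooted_tree_def by (metis append_assoc)
    have uzs: "u @ z \<in> subtree T x" using uz u by (auto simp: subtree_def)
    have "(u @ z) @ [a] \<in> T" using snoc.prems by simp
    then obtain j where "\<phi> ((u @ z) @ [a]) = \<phi> (u@z) @ [j]"
      using I uzs unfolding isoT_def by blast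
    then show ?case using snoc.IH[OF uz] snoc.prems
      by (metis append_assoc prefix_append)
  qed
qed

lemma prefix_eq_len: "prefix a c \<Longrightarrow> prefix b c \<Longrightarrow> length a = length b \<Longrightarrow> a = b"
  by (metis prefix_length_prefix prefix_order.antisym order_refl)

lemma isoT_reflect:
  assumes R: "rooted_tree T" and I: "isoT T x y \<phi>" and u: "u \<in> subtree T x"
    and w: "w \<in> subtree T x" and p: "prefix (\<phi> u) (\<phi> w)"
  shows "prefix u w"
proof -
  have lu: "length (\<phi> u) + length x = length u + length y" using isoT_len[OF R I u] by simp
  have lw: "length (\<phi> w) + length x = length w + length y" using isoT_len[OF R I w] by simp
  have "length (\<phi> u) \<le> length (\<phi> w)" using p prefix_length_le by blast
  then have le: "length u \<le> length w" using lu lw by simp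
  define a where "a = take (length u) w"
  have xu: "length x \<le> length u" using u by (auto simp: subtree_def)
  have xw: "prefix x w" using w by (auto simp: subtree_alt)
  have aw: "prefix a w" by (simp add: a_def take_is_prefix)
  have wT: "w \<in> T" using w by (auto simp: subtree_def)
  have aT: "a \<in> T" using rooted_prefix[OF R wT aw] .
  have "prefix x a" using xw xu le unfolding a_def
    by (metis prefix_def take_append take_all order_refl append_take_drop_id take_is_prefix prefix_length_prefix length_take min.absorb1)
  then have as: "a \<in> subtree T x" using aT by (auto simp: subtree_alt)
  have "prefix (\<phi> a) (\<phi> w)" using isoT_prefix[OF R I as wT aw] .
  moreover have "length (\<phi> a) = length (\<phi> u)" using isoT_len[OF R I as] lu le by (simp add: a_def)
  ultimately have "\<phi> a = \<phi> u" using p prefix_eq_len by blast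
  then have "a = u" using I as u by (auto simp: isoT_def bij_betw_def inj_on_def)
  then show ?thesis using aw by simp
qed



lemma isoT_inv:
  assumes R: "rooted_tree T" and I: "isoT T x y \<phi>" and xT: "x \<in> T"
  shows "isoT T y x (inv_into (subtree T x) \<phi>)"
proof -
  let ?\<psi> = "inv_into (subtree T x) \<phi>"
  have bij: "bij_betw \<phi> (subtree T x) (subtree T y)" using I by (simp add: isoT_def)
  have b2: "bij_betw ?\<psi> (subtree T y) (subtree T x)" using bij_betw_inv_into[OF bij] .
  have xs: "x \<in> subtree T x" using xT by (auto simp: subtree_def)
  have "?\<psi> y = x" using I xs bij by (auto simp: isoT_def bij_betw_def intro: inv_into_f_f)
  moreover have "\<forall>w\<in>subtree T y. \<forall>j. w @ [j] \<in> T \<longrightarrow> (\<exists>i. ?\<psi> (w @ [j]) = ?\<psi> w @ [i])"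
  proof (intro ballI allI impI)
    fix w j assume w: "w \<in> subtree T y" and wj: "w @ [j] \<in> T"
    have wjs: "w @ [j] \<in> subtree T y" using w wj by (auto simp: subtree_def)
    define u where "u = ?\<psi> w"
    define v where "v = ?\<psi> (w @ [j])"
    have us: "u \<in> subtree T x" using bij_betw_apply[OF b2 w] u_def by simp
    have vs: "v \<in> subtree T x" using bij_betw_apply[OF b2 wjs] v_def by simp
    have fu: "\<phi> u = w" using w bij unfolding u_def by (simp add: bij_betw_inv_into_right)
    have fv: "\<phi> v = w @ [j]" using wjs bij unfolding v_def by (simp add: bij_betw_inv_into_right)
    have "prefix (\<phi> u) (\<phi> v)" using fu fv by simp
    then have p: "prefix u v" using isoT_reflect[OF R I us vs] by simp
    have "length v = Suc (length u)" using isoT_len[OF R I us] isoT_len[OF R I vs] fu fv by simp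
    moreover obtain z where vz: "v = u @ z" using p unfolding prefix_def by blast
    ultimately have "length z = 1" by simp
    then obtain i where "z = [i]" by (cases z) auto
    then have "v = u @ [i]" using vz by simp
    then show "\<exists>i. ?\<psi> (w @ [j]) = ?\<psi> w @ [i]" using u_def v_def by auto
  qed
  ultimately show ?thesis using b2 by (simp add: isoT_def)
qed

lemma isoT_comp:
  assumes I: "isoT T x y \<phi>" and J: "isoT T y z \<psi>"
  shows "isoT T x z (\<psi> \<circ> \<phi>)"
proof -
  have bij: "bij_betw \<phi> (subtree T x) (subtree T y)" using I by (simp add: isoT_def)
  have bij2: "bij_betw \<psi> (subtree T y) (subtree T z)" using J by (simp add: isoT_def)
  have "\<forall>u\<in>subtree T x. \<forall>i. u @ [i] \<in> T \<longrightarrow> (\<exists>k. (\<psi> \<circ> \<phi>) (u @ [i]) = (\<psi> \<circ> \<phi>) u @ [k])"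
  proof (intro ballI allI impI)
    fix u i assume u: "u \<in> subtree T x" and ui: "u @ [i] \<in> T"
    obtain j where j: "\<phi> (u @ [i]) = \<phi> u @ [j]" using I u ui by (auto simp: isoT_def)
    have uis: "u @ [i] \<in> subtree T x" using u ui by (auto simp: subtree_def)
    have "\<phi> u @ [j] \<in> subtree T y" using bij_betw_apply[OF bij uis] j by simp
    then have "\<phi> u @ [j] \<in> T" by (auto simp: subtree_def)
    moreover have "\<phi> u \<in> subtree T y" using bij_betw_apply[OF bij u] .
    ultimately obtain k where "\<psi> (\<phi> u @ [j]) = \<psi> (\<phi> u) @ [k]" using J by (auto simp: isoT_def)
    then show "\<exists>k. (\<psi> \<circ> \<phi>) (u @ [i]) = (\<psi> \<circ> \<phi>) u @ [k]" using j by auto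
  qed
  then show ?thesis using I J bij_betw_trans[OF bij bij2] by (simp add: isoT_def)
qed

lemma isoT_restrict:
  assumes R: "rooted_tree T" and I: "isoT T x y \<phi>" and u: "u \<in> subtree T x"
  shows "isoT T u (\<phi> u) \<phi>"
proof -
  have bij: "bij_betw \<phi> (subtree T x) (subtree T y)" using I by (simp add: isoT_def)
  have sub: "subtree T u \<subseteq> subtree T x" using u by (auto simp: subtree_alt intro: prefix_order.trans)
  have inj: "inj_on \<phi> (subtree T u)" using bij sub by (auto simp: bij_betw_def intro: inj_on_subset)
  have fu: "\<phi> u \<in> subtree T y" using bij_betw_apply[OF bij u] .
  have "\<phi> ` subtree T u = subtree T (\<phi> u)"
  proof
    show "\<phi> ` subtree T u \<subseteq> subtree T (\<phi> u)"
    proof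
      fix w assume "w \<in> \<phi> ` subtree T u"
      then obtain v where v: "v \<in> subtree T u" and w: "w = \<phi> v" by auto
      have vx: "v \<in> subtree T x" using v sub by auto
      have "prefix (\<phi> u) (\<phi> v)" using isoT_prefix[OF R I u] v by (auto simp: subtree_alt)
      moreover have "\<phi> v \<in> T" using bij_betw_apply[OF bij vx] by (auto simp: subtree_def)
      ultimately show "w \<in> subtree T (\<phi> u)" using w by (auto simp: subtree_alt)
    qed
  next
    show "subtree T (\<phi> u) \<subseteq> \<phi> ` subtree T u"
    proof
      fix w assume w: "w \<in> subtree T (\<phi> u)"
      have "w \<in> subtree T y" using w fu by (auto simp: subtree_alt intro: prefix_order.trans)
      then obtain v where v: "v \<in> subtree T x" and wv: "w = \<phi> v" using bij by (auto simp: bij_betw_def)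
      have "prefix (\<phi> u) (\<phi> v)" using w wv by (auto simp: subtree_alt)
      then have "prefix u v" using isoT_reflect[OF R I u v] by simp
      then have "v \<in> subtree T u" using v by (auto simp: subtree_alt)
      then show "w \<in> \<phi> ` subtree T u" using wv by auto
    qed
  qed
  then have "bij_betw \<phi> (subtree T u) (subtree T (\<phi> u))" using inj by (simp add: bij_betw_def)
  moreover have "\<forall>v\<in>subtree T u. \<forall>i. v @ [i] \<in> T \<longrightarrow> (\<exists>j. \<phi> (v @ [i]) = \<phi> v @ [j])"
    using I sub by (auto simp: isoT_def)
  ultimately show ?thesis by (simp add: isoT_def)
qed

lemma isoT_card:
  assumes R: "rooted_tree T" and I: "isoT T x y \<phi>"
  shows "card (Fc T x n) = card (Fc T y n)"
proof -
  have bij: "bij_betw \<phi> (subtree T x) (subtree T y)" using I by (simp add: isoT_def)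
  have sub: "Fc T x n \<subseteq> subtree T x" by (auto simp: Fc_def)
  have inj: "inj_on \<phi> (Fc T x n)" using bij sub by (auto simp: bij_betw_def intro: inj_on_subset)
  have "\<phi> ` Fc T x n = Fc T y n"
  proof
    show "\<phi> ` Fc T x n \<subseteq> Fc T y n"
      using isoT_len[OF R I] by (force simp: Fc_def)
  next
    show "Fc T y n \<subseteq> \<phi> ` Fc T x n"
    proof
      fix w assume w: "w \<in> Fc T y n"
      then have "w \<in> subtree T y" by (simp add: Fc_def)
      then obtain v where v: "v \<in> subtree T x" and wv: "w = \<phi> v" using bij by (auto simp: bij_betw_def)
      have "length v \<le> length x + n" using isoT_len[OF R I v] w wv by (simp add: Fc_def)
      then show "w \<in> \<phi> ` Fc T x n" using v wv by (auto simp: Fc_def)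
    qed
  qed
  then show ?thesis using card_image[OF inj] by simp
qed

lemma iso_refl: "x \<in> T \<Longrightarrow> iso T x x"
  unfolding iso_def isoT_def by (rule conjI, simp, rule exI[of _ id], auto)

lemma iso_in2: assumes "iso T x y" shows "y \<in> T"
proof -
  obtain \<phi> where I: "isoT T x y \<phi>" and xT: "x \<in> T" using assms by (auto simp: iso_def)
  have "x \<in> subtree T x" using xT by (auto simp: subtree_def)
  then have "\<phi> x \<in> subtree T y" using I by (auto simp: isoT_def bij_betw_def)
  then show ?thesis using I by (auto simp: isoT_def subtree_def)
qed

lemma iso_sym: "rooted_tree T \<Longrightarrow> iso T x y \<Longrightarrow> iso T y x"
  using isoT_inv iso_in2 unfolding iso_def by blast

lemma iso_trans: "iso T x y \<Longrightarrow> iso T y z \<Longrightarrow> iso T x z"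
  using isoT_comp unfolding iso_def by blast

lemma iso_card: "rooted_tree T \<Longrightarrow> iso T x y \<Longrightarrow> card (Fc T x n) = card (Fc T y n)"
  using isoT_card unfolding iso_def by blast

lemma periodic_rep:
  assumes R: "rooted_tree T" and P: "periodicN T N" and xT: "x \<in> T"
  shows "\<exists>r\<in>ball T N. iso T x r"
proof -
  obtain f where fx: "f x \<in> T" and fl: "length (f x) \<le> N" and
    bij: "bij_betw f (subtree T x) (subtree T (f x))" and
    adjp: "\<forall>u\<in>subtree T x. \<forall>v\<in>subtree T x. adj T u v \<longrightarrow> adj T (f u) (f v)"
    using P xT unfolding periodicN_def by blast
  have inj: "inj_on f (subtree T x)" using bij by (simp add: bij_betw_def)
  have child: "\<forall>i. x @ z @ [i] \<in> T \<longrightarrow> (\<exists>j. f (x @ z @ [i]) = f (x @ z) @ [j])" for z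
  proof (induction z rule: rev_induct)
    case Nil
    show ?case
    proof (intro allI impI)
      fix i assume xi: "x @ [] @ [i] \<in> T"
      have xs: "x \<in> subtree T x" using xT by (auto simp: subtree_def)
      have xis: "x @ [i] \<in> subtree T x" using xi by (auto simp: subtree_def)
      have "adj T x (x @ [i])" using xT xi by (auto simp: adj_def)
      then have a: "adj T (f x) (f (x @ [i]))" using adjp xs xis by blast
      have "f (x @ [i]) \<in> subtree T (f x)" using bij_betw_apply[OF bij xis] .
      then obtain z' where z': "f (x @ [i]) = f x @ z'" by (auto simp: subtree_def)
      show "\<exists>j. f (x @ [] @ [i]) = f (x @ []) @ [j]"
      proof (cases "\<exists>j. f (x @ [i]) = f x @ [j]")
        case True then show ?thesis by simp
      next
        case False
        then obtain j where "f x = f (x @ [i]) @ [j]" using a by (auto simp: adj_def)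
        then have "length (f x) = length (f (x@[i])) + 1" by simp
        then show ?thesis using z' by simp
      qed
    qed
  next
    case (snoc k z)
    show ?case
    proof (intro allI impI)
      fix i assume h: "x @ (z @ [k]) @ [i] \<in> T"
      have a1: "x @ z @ [k] \<in> T" using h R unfolding rooted_tree_def by (metis append_assoc)
      have a0: "x @ z \<in> T" using a1 R unfolding rooted_tree_def by (metis append_assoc)
      obtain j' where j': "f (x @ z @ [k]) = f (x @ z) @ [j']" using snoc a1 by blast
      have s1: "x @ z @ [k] \<in> subtree T x" using a1 by (auto simp: subtree_def)
      have s2: "x @ (z @ [k]) @ [i] \<in> subtree T x" using h by (auto simp: subtree_def)
      have s0: "x @ z \<in> subtree T x" using a0 by (auto simp: subtree_def)
      have "adj T (x @ z @ [k]) (x @ (z @ [k]) @ [i])" using a1 h by (auto simp: adj_def)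
      then have a: "adj T (f (x @ z @ [k])) (f (x @ (z @ [k]) @ [i]))" using adjp s1 s2 by blast
      show "\<exists>j. f (x @ (z @ [k]) @ [i]) = f (x @ z @ [k]) @ [j]"
      proof (cases "\<exists>j. f (x @ (z @ [k]) @ [i]) = f (x @ z @ [k]) @ [j]")
        case True then show ?thesis by simp
      next
        case False
        then obtain j where "f (x @ z @ [k]) = f (x @ (z @ [k]) @ [i]) @ [j]" using a by (auto simp: adj_def)
        then have "f (x @ (z @ [k]) @ [i]) = f (x @ z)" using j' by simp
        then have "x @ (z @ [k]) @ [i] = x @ z" using inj s2 s0 by (auto simp: inj_on_def)
        then show ?thesis by simp
      qed
    qed
  qed
  have "isoT T x (f x) f"
    unfolding isoT_def
  proof (intro conjI ballI allI impI)
    show "bij_betw f (subtree T x) (subtree T (f x))" by fact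
    show "f x = f x" by simp
  next
    fix u i assume u: "u \<in> subtree T x" and ui: "u @ [i] \<in> T"
    then obtain z where "u = x @ z" by (auto simp: subtree_def)
    then show "\<exists>j. f (u @ [i]) = f u @ [j]" using child[of z] ui by simp
  qed
  then show ?thesis using fx fl xT by (auto simp: iso_def ball_def)
qed



lemma lower_shift:
  fixes G :: "nat \<Rightarrow> real"
  assumes g1: "\<forall>n. 1 \<le> G n" and gh: "\<forall>n\<ge>h. c * (real (n - h) + 1) ^ d \<le> G n" and c: "c > 0"
  shows "\<exists>c'>0. \<forall>n. c' * (real n + 1) ^ d \<le> G n"
proof -
  define c' where "c' = min 1 c / (real h + 1) ^ d"
  have hp: "(real h + 1) ^ d > 0" by simp
  have c'p: "c' > 0" using c hp by (simp add: c'_def)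
  have "c' * (real n + 1) ^ d \<le> G n" for n
  proof (cases "n < h")
    case True
    have "(real n + 1) ^ d \<le> (real h + 1) ^ d" using True by (intro power_mono) auto
    then have "c' * (real n + 1) ^ d \<le> c' * (real h + 1) ^ d" using c'p by (intro mult_left_mono) auto
    also have "\<dots> = min 1 c" using hp by (simp add: c'_def)
    also have "\<dots> \<le> 1" by simp
    finally show ?thesis using g1 by (meson order_trans)
  next
    case False
    have hn: "real h \<le> real n" using False by simp
    then have "real h * real h \<le> real h * real n" by (intro mult_left_mono) auto
    then have "real n + 1 \<le> (real h + 1) * (real (n - h) + 1)"
      using False by (simp add: of_nat_diff algebra_simps)
    then have "(real n + 1) ^ d \<le> ((real h + 1) * (real (n - h) + 1)) ^ d" by (intro power_mono) auto
    also have "\<dots> = (real h + 1) ^ d * (real (n - h) + 1) ^ d" by (simp add: power_mult_distrib)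
    finally have A: "(real n + 1) ^ d \<le> (real h + 1) ^ d * (real (n - h) + 1) ^ d" .
    have "c' * (real n + 1) ^ d \<le> c' * ((real h + 1) ^ d * (real (n - h) + 1) ^ d)"
      using A c'p by (intro mult_left_mono) auto
    also have "\<dots> = min 1 c * (real (n - h) + 1) ^ d" using hp by (simp add: c'_def)
    also have "\<dots> \<le> c * (real (n - h) + 1) ^ d" by (intro mult_right_mono) auto
    also have "\<dots> \<le> G n" using gh False by simp
    finally show ?thesis .
  qed
  then show ?thesis using c'p by blast
qed

lemma combine:
  fixes G :: "nat \<Rightarrow> real" and Fs :: "'a \<Rightarrow> nat \<Rightarrow> real"
  assumes fin: "finite S"
    and bnd: "\<forall>s\<in>S. cs s > 0 \<and> (\<forall>n. cs s * (real n + 1) ^ ds s \<le> Fs s n \<and> Fs s n \<le> Cs s * (real n + 1) ^ ds s)"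
    and g1: "\<forall>n. 1 \<le> G n"
    and up: "\<forall>n. G n \<le> A + (\<Sum>s\<in>S. Fs s n)"
    and lo: "\<forall>s\<in>S. \<forall>n\<ge>h s. Fs s (n - h s) \<le> G n"
  shows "\<exists>c C. c > 0 \<and> (\<forall>n. c * (real n + 1) ^ Max (insert 0 (ds ` S)) \<le> G n \<and>
             G n \<le> C * (real n + 1) ^ Max (insert 0 (ds ` S)))"
proof -
  define D where "D = Max (insert 0 (ds ` S))"
  have dsD: "ds s \<le> D" if "s \<in> S" for s using fin that by (simp add: D_def)
  define C where "C = \<bar>A\<bar> + (\<Sum>s\<in>S. \<bar>Cs s\<bar>)"
  have upper: "G n \<le> C * (real n + 1) ^ D" for n
  proof -
    have p1: "1 \<le> (real n + 1) ^ D" by (simp add: one_le_power)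
    have "A \<le> \<bar>A\<bar> * (real n + 1) ^ D" using p1
      by (metis abs_ge_self abs_ge_zero mult_cancel_left1 mult_left_mono order_trans)
    moreover have "Fs s n \<le> \<bar>Cs s\<bar> * (real n + 1) ^ D" if s: "s \<in> S" for s
    proof -
      have "Fs s n \<le> Cs s * (real n + 1) ^ ds s" using bnd s by blast
      also have "\<dots> \<le> \<bar>Cs s\<bar> * (real n + 1) ^ ds s" by (intro mult_right_mono) auto
      also have "\<dots> \<le> \<bar>Cs s\<bar> * (real n + 1) ^ D"
        by (intro mult_left_mono power_increasing dsD s) auto
      finally show ?thesis .
    qed
    then have "(\<Sum>s\<in>S. Fs s n) \<le> (\<Sum>s\<in>S. \<bar>Cs s\<bar> * (real n + 1) ^ D)" by (intro sum_mono) auto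
    moreover have "G n \<le> A + (\<Sum>s\<in>S. Fs s n)" using up by blast
    ultimately have "G n \<le> \<bar>A\<bar> * (real n + 1) ^ D + (\<Sum>s\<in>S. \<bar>Cs s\<bar> * (real n + 1) ^ D)"
      by linarith
    then have "G n \<le> \<bar>A\<bar> * (real n + 1) ^ D + (\<Sum>s\<in>S. \<bar>Cs s\<bar>) * (real n + 1) ^ D"
      by (simp add: sum_distrib_right)
    then show ?thesis by (simp add: C_def algebra_simps)
  qed
  have "\<exists>c>0. \<forall>n. c * (real n + 1) ^ D \<le> G n"
  proof (cases "D = 0")
    case True then show ?thesis using g1 by (intro exI[of _ 1]) auto
  next
    case False
    then have "D \<in> ds ` S" unfolding D_def using fin
      by (metis Max_in finite_imageI finite_insert insert_iff insert_not_empty)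
    then obtain s where s: "s \<in> S" and Ds: "D = ds s" by auto
    have "\<forall>n\<ge>h s. cs s * (real (n - h s) + 1) ^ d \<le> G n" if "d = ds s" for d
      using bnd s lo that by (meson order_trans)
    then show ?thesis using lower_shift[OF g1, of "h s" "cs s" D] bnd s Ds by auto
  qed
  then show ?thesis using upper unfolding D_def by blast
qed

lemma rec_sum:
  fixes F g :: "nat \<Rightarrow> real"
  assumes L: "L \<ge> 1"
    and rec: "\<forall>n. F n = g n + (if L \<le> n then F (n - L) else 0)"
    and c: "c > 0" and gb: "\<forall>n. c * (real n + 1) ^ d \<le> g n \<and> g n \<le> C * (real n + 1) ^ d"
  shows "\<exists>c' C'. c' > 0 \<and> (\<forall>n. c' * (real n + 1) ^ Suc d \<le> F n \<and> F n \<le> C' * (real n + 1) ^ Suc d)"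
proof -
  have g0: "g n \<ge> 0" for n using gb c by (smt (verit) mult_pos_pos zero_less_power of_nat_0_le_iff)
  have C0: "C \<ge> 0" using gb[rule_format, of 0] c by simp
  have F0: "F n \<ge> 0" for n
  proof (induction n rule: less_induct)
    case (less n) then show ?case using rec[rule_format, of n] g0[of n] L by auto
  qed
  have up: "F n \<le> C * (real n + 1) ^ d * (real (n div L) + 1)" for n
  proof (induction n rule: less_induct)
    case (less n)
    show ?case
    proof (cases "L \<le> n")
      case False
      then have "n div L = 0" by simp
      then show ?thesis using rec[rule_format, of n] gb False by simp
    next
      case True
      have IH: "F (n - L) \<le> C * (real (n - L) + 1) ^ d * (real ((n - L) div L) + 1)"
        using less.IH[of "n - L"] L True by simp
      have "n div L = ((n - L) + L) div L" using True by simp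
      also have "\<dots> = (n - L) div L + 1" using L by simp
      finally have dv: "(n - L) div L + 1 = n div L" by simp
      have pw: "(real (n - L) + 1) ^ d \<le> (real n + 1) ^ d" by (intro power_mono) auto
      have "F n = g n + F (n - L)" using rec True by simp
      also have "\<dots> \<le> C * (real n + 1) ^ d + C * (real (n - L) + 1) ^ d * (real ((n - L) div L) + 1)"
        using gb IH by (intro add_mono) auto
      also have "\<dots> \<le> C * (real n + 1) ^ d + C * (real n + 1) ^ d * (real ((n - L) div L) + 1)"
        using pw C0 by (intro add_left_mono mult_right_mono mult_left_mono) auto
      also have "\<dots> = C * (real n + 1) ^ d * (real ((n - L) div L + 1) + 1)" by (simp add: algebra_simps)
      also have "\<dots> = C * (real n + 1) ^ d * (real (n div L) + 1)" using dv by simp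
      finally show ?thesis .
    qed
  qed
  have upper: "F n \<le> C * (real n + 1) ^ Suc d" for n
  proof -
    have "real (n div L) \<le> real n" by simp
    then have "C * (real n + 1) ^ d * (real (n div L) + 1) \<le> C * (real n + 1) ^ d * (real n + 1)"
      using C0 by (intro mult_left_mono) auto
    then show ?thesis using up[of n] by (simp add: algebra_simps)
  qed
  have lo: "m * L \<le> n + L \<Longrightarrow> c * (\<Sum>k<m. (real (n - k * L) + 1) ^ d) \<le> F n" for m n
  proof (induction m arbitrary: n)
    case 0 then show ?case using F0 by simp
  next
    case (Suc m)
    show ?case
    proof (cases "m = 0")
      case True
      have "g n \<le> F n" using rec[rule_format, of n] F0[of "n - L"] by auto
      then show ?thesis using True gb[rule_format, of n] by simp
    next
      case False
      then have nL: "L \<le> n" using Suc.prems by (cases m) auto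
      have IH: "c * (\<Sum>k<m. (real (n - L - k * L) + 1) ^ d) \<le> F (n - L)"
        using Suc.IH[of "n - L"] Suc.prems nL by simp
      have "(\<Sum>k<Suc m. (real (n - k * L) + 1) ^ d) = (real n + 1) ^ d + (\<Sum>k<m. (real (n - Suc k * L) + 1) ^ d)"
        by (simp only: sum.lessThan_Suc_shift) simp
      also have "(\<Sum>k<m. (real (n - Suc k * L) + 1) ^ d) = (\<Sum>k<m. (real (n - L - k * L) + 1) ^ d)"
        by (simp add: diff_diff_left)
      finally have e: "(\<Sum>k<Suc m. (real (n - k * L) + 1) ^ d) = (real n + 1) ^ d + (\<Sum>k<m. (real (n - L - k * L) + 1) ^ d)" .
      have "F n = g n + F (n - L)" using rec nL by simp
      then show ?thesis using e IH gb[rule_format, of n] by (simp add: algebra_simps)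
    qed
  qed
  define c' where "c' = c / (2 * real L * 2 ^ d)"
  have c'p: "c' > 0" using c L by (simp add: c'_def)
  have lower: "c' * (real n + 1) ^ Suc d \<le> F n" for n
  proof -
    define m where "m = n div (2 * L) + 1"
    have mdl: "(n div (2 * L)) * (2 * L) \<le> n" by (simp add: div_times_less_eq_dividend)
    have mL: "m * L \<le> n + L" using mdl unfolding m_def by (simp add: algebra_simps)
    have trm: "((real n + 1) / 2) ^ d \<le> (real (n - k * L) + 1) ^ d" if k: "k < m" for k
    proof -
      have "k \<le> n div (2 * L)" using k m_def by simp
      then have "k * (2 * L) \<le> n" using mdl by (meson le_trans mult_le_mono1)
      then have "2 * (k * L) \<le> n" by (simp add: algebra_simps)
      then have r: "2 * (real k * real L) \<le> real n"
        by (metis of_nat_le_iff of_nat_mult of_nat_numeral)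
      have "k * L \<le> n" using \<open>2 * (k * L) \<le> n\<close> by simp
      then have "real n + 1 \<le> 2 * (real (n - k * L) + 1)" using r by (simp add: of_nat_diff)
      then show ?thesis by (intro power_mono) auto
    qed
    have "real m * ((real n + 1) / 2) ^ d \<le> (\<Sum>k<m. (real (n - k * L) + 1) ^ d)"
      using sum_mono[of "{..<m}" "\<lambda>k. ((real n + 1) / 2) ^ d" "\<lambda>k. (real (n - k * L) + 1) ^ d"] trm by simp
    moreover have "real n + 1 \<le> 2 * real L * real m"
    proof -
      have k0: "0 < 2 * L" using L by simp
      have "n = n div (2 * L) * (2 * L) + n mod (2 * L)" by (rule div_mult_mod_eq[symmetric])
      moreover have "n mod (2 * L) < 2 * L" using mod_less_divisor[OF k0] .
      ultimately have "n < (n div (2 * L) + 1) * (2 * L)" by (simp add: algebra_simps)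
      then have "n + 1 \<le> 2 * L * m" unfolding m_def by (simp add: algebra_simps)
      then show ?thesis by (metis of_nat_1 of_nat_add of_nat_le_iff of_nat_mult of_nat_numeral)
    qed
    moreover have "(real n + 1) / (2 * real L) \<le> real m"
      using \<open>real n + 1 \<le> 2 * real L * real m\<close> L by (simp add: divide_le_eq mult.commute)
    then have "(real n + 1) / (2 * real L) * ((real n + 1) / 2) ^ d \<le> real m * ((real n + 1) / 2) ^ d"
      by (intro mult_right_mono) auto
    ultimately have A: "(real n + 1) / (2 * real L) * ((real n + 1) / 2) ^ d \<le> (\<Sum>k<m. (real (n - k * L) + 1) ^ d)"
      by linarith
    have "c' * (real n + 1) ^ Suc d = c * ((real n + 1) / (2 * real L) * ((real n + 1) / 2) ^ d)"
      using L by (simp add: c'_def power_divide field_simps)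
    also have "\<dots> \<le> c * (\<Sum>k<m. (real (n - k * L) + 1) ^ d)" using A c by (intro mult_left_mono) auto
    also have "\<dots> \<le> F n" using lo[OF mL] .
    finally show ?thesis .
  qed
  show ?thesis using c'p lower upper by blast
qed



definition Reach :: "vert set \<Rightarrow> nat \<Rightarrow> vert \<Rightarrow> vert set" where
  "Reach T N x = {r \<in> ball T N. \<exists>v\<in>subtree T x. iso T v r}"

definition caseA :: "vert set \<Rightarrow> bool" where
  "caseA T \<longleftrightarrow> (\<exists>x\<in>T. \<exists>y1\<in>subtree T x. \<exists>y2\<in>subtree T x.
      \<not> prefix y1 y2 \<and> \<not> prefix y2 y1 \<and> iso T y1 x \<and> iso T y2 x)"

definition FF :: "vert set \<Rightarrow> vert \<Rightarrow> nat \<Rightarrow> real" where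
  "FF T x n = real (card (Fc T x n))"

definition GoodB :: "vert set \<Rightarrow> vert \<Rightarrow> bool" where
  "GoodB T x \<longleftrightarrow> (\<exists>d c C. c > 0 \<and> (\<forall>n. c * (real n + 1) ^ d \<le> FF T x n \<and> FF T x n \<le> C * (real n + 1) ^ d))"

lemma pfx_len_eq: "prefix a b \<Longrightarrow> length a = length b \<Longrightarrow> a = b"
  by (auto simp: prefix_def)

lemma pfx_take: "prefix a b \<Longrightarrow> a = take (length a) b"
  by (auto simp: prefix_def)

lemma pfx_aux: "prefix s x1 \<or> prefix x1 s \<Longrightarrow> \<not> prefix s x1 \<Longrightarrow> length s \<le> length x1 \<Longrightarrow> False"
  using pfx_len_eq prefix_length_le by (metis order_antisym prefix_order.refl)

lemma pfx_take2: "prefix x x1 \<Longrightarrow> length x \<le> k \<Longrightarrow> prefix x (take k x1)"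
  by (auto simp: prefix_def)

lemma subtree_mono: "s \<in> subtree T x \<Longrightarrow> subtree T s \<subseteq> subtree T x"
  by (auto simp: subtree_alt intro: prefix_order.trans)

lemma reach_less:
  assumes R: "rooted_tree T" and LF: "locally_finite T" and P: "periodicN T N"
    and xT: "x \<in> T" and s: "s \<in> subtree T x" and no: "\<forall>v\<in>subtree T s. \<not> iso T v x"
  shows "card (Reach T N s) < card (Reach T N x)"
proof -
  obtain r where r: "r \<in> ball T N" and xr: "iso T x r" using periodic_rep[OF R P xT] by blast
  have xs: "x \<in> subtree T x" using xT by (auto simp: subtree_def)
  have rin: "r \<in> Reach T N x" using r xr xs by (auto simp: Reach_def)
  have rout: "r \<notin> Reach T N s"
  proof
    assume "r \<in> Reach T N s"
    then obtain v where v: "v \<in> subtree T s" and vr: "iso T v r" by (auto simp: Reach_def)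
    have "iso T v x" using iso_trans[OF vr iso_sym[OF R xr]] .
    then show False using no v by blast
  qed
  have sub: "Reach T N s \<subseteq> Reach T N x" using subtree_mono[OF s] by (auto simp: Reach_def)
  have fin: "finite (Reach T N x)" using finite_ball[OF R LF] by (auto simp: Reach_def)
  have "Reach T N s \<subset> Reach T N x" using sub rin rout by blast
  then show ?thesis using psubset_card_mono[OF fin] by blast
qed

lemma FF_ge1: assumes R: "rooted_tree T" and LF: "locally_finite T" and xT: "x \<in> T"
  shows "1 \<le> FF T x n"
proof -
  have "x \<in> Fc T x n" using xT by (auto simp: Fc_def subtree_def)
  then have "card (Fc T x n) \<noteq> 0" using finite_Fc[OF R LF] by auto
  then show ?thesis by (simp add: FF_def)
qed

lemma choice3:
  assumes "\<forall>c\<in>S. \<exists>d cc C. P c d cc C"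
  shows "\<exists>ds cs Cs. \<forall>c\<in>S. P c (ds c) (cs c) (Cs c)"
proof -
  have "\<forall>c\<in>S. \<exists>t. P c (fst t) (fst (snd t)) (snd (snd t))" using assms by force
  then obtain f where "\<forall>c\<in>S. P c (fst (f c)) (fst (snd (f c))) (snd (snd (f c)))" by metis
  then show ?thesis by (intro exI[of _ "\<lambda>c. fst (f c)"] exI[of _ "\<lambda>c. fst (snd (f c))"] exI[of _ "\<lambda>c. snd (snd (f c))"]) simp
qed

lemma nonrec_step:
  assumes R: "rooted_tree T" and LF: "locally_finite T" and xT: "x \<in> T"
    and IH: "\<forall>c\<in>(\<lambda>i. x @ [i]) ` {i. x @ [i] \<in> T}. GoodB T c"
  shows "GoodB T x"
proof -
  define Ch where "Ch = (\<lambda>i. x @ [i]) ` {i. x @ [i] \<in> T}"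
  have finCh: "finite Ch" using LF xT by (auto simp: Ch_def locally_finite_def)
  obtain ds cs Cs where bnd: "\<forall>s\<in>Ch. cs s > 0 \<and> (\<forall>n. cs s * (real n + 1) ^ ds s \<le> FF T s n \<and> FF T s n \<le> Cs s * (real n + 1) ^ ds s)"
    using choice3[of Ch "\<lambda>s d c C. c > 0 \<and> (\<forall>n. c * (real n + 1) ^ d \<le> FF T s n \<and> FF T s n \<le> C * (real n + 1) ^ d)"]
      IH unfolding GoodB_def Ch_def by blast
  have g1: "\<forall>n. 1 \<le> FF T x n" using FF_ge1[OF R LF xT] by blast
  have up: "\<forall>n. FF T x n \<le> 1 + (\<Sum>s\<in>Ch. FF T s n)"
  proof
    fix n
    have "Fc T x n \<subseteq> {x} \<union> (\<Union>s\<in>Ch. Fc T s n)"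
    proof
      fix v assume v: "v \<in> Fc T x n"
      show "v \<in> {x} \<union> (\<Union>s\<in>Ch. Fc T s n)"
      proof (cases "v = x")
        case True then show ?thesis by simp
      next
        case False
        obtain z where vz: "v = x @ z" and vT: "v \<in> T" and vl: "length v \<le> length x + n"
          using v by (auto simp: Fc_def subtree_def)
        then obtain i z' where z: "z = i # z'" using False by (cases z) auto
        have "prefix (x @ [i]) v" using vz z by simp
        then have ciT: "x @ [i] \<in> T" using rooted_prefix[OF R vT] by blast
        then have "x @ [i] \<in> Ch" by (auto simp: Ch_def)
        moreover have "v \<in> Fc T (x @ [i]) n" using vT vz z vl by (auto simp: Fc_def subtree_def)
        ultimately show ?thesis by blast
      qed
    qed
    then have "card (Fc T x n) \<le> card ({x} \<union> (\<Union>s\<in>Ch. Fc T s n))"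
      using finCh finite_Fc[OF R LF] by (intro card_mono) auto
    also have "\<dots> \<le> card {x} + card (\<Union>s\<in>Ch. Fc T s n)" by (rule card_Un_le)
    also have "\<dots> \<le> 1 + (\<Sum>s\<in>Ch. card (Fc T s n))" using card_UN_le[OF finCh] by simp
    finally have "real (card (Fc T x n)) \<le> real (1 + (\<Sum>s\<in>Ch. card (Fc T s n)))" by linarith
    then show "FF T x n \<le> 1 + (\<Sum>s\<in>Ch. FF T s n)" by (simp add: FF_def)
  qed
  have lo: "\<forall>s\<in>Ch. \<forall>n\<ge>(\<lambda>_. 1::nat) s. FF T s (n - (\<lambda>_. 1) s) \<le> FF T x n"
  proof (intro ballI allI impI)
    fix s n assume s: "s \<in> Ch" and n: "n \<ge> (\<lambda>_. 1::nat) s"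
    obtain i where si: "s = x @ [i]" using s by (auto simp: Ch_def)
    have "Fc T s (n - 1) \<subseteq> Fc T x n" using n si by (auto simp: Fc_def subtree_def)
    then have "card (Fc T s (n - 1)) \<le> card (Fc T x n)" using finite_Fc[OF R LF] by (intro card_mono) auto
    then show "FF T s (n - (\<lambda>_. 1) s) \<le> FF T x n" by (simp add: FF_def)
  qed
  show ?thesis using combine[OF finCh bnd g1 up lo] unfolding GoodB_def by blast
qed


lemma rec_step:
  assumes R: "rooted_tree T" and LF: "locally_finite T" and xT: "x \<in> T"
    and noA: "\<not> caseA T"
    and x1: "x1 \<in> subtree T x" and x1x: "x1 \<noteq> x" and iso1: "iso T x1 x"
    and IH: "\<forall>s\<in>subtree T x. (\<forall>v\<in>subtree T s. \<not> iso T v x) \<longrightarrow> GoodB T s"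
  shows "GoodB T x"
proof -
  have x1T: "x1 \<in> T" and px: "prefix x x1" using x1 by (auto simp: subtree_alt)
  have lx: "length x < length x1"
    using px x1x by (metis prefix_length_le pfx_len_eq order_le_less)
  define L where "L = length x1 - length x"
  have L1: "L \<ge> 1" using lx by (simp add: L_def)
  define gs where "gs n = Fc T x n - subtree T x1" for n
  define g where "g n = real (card (gs n))" for n
  have finF: "finite (Fc T y n)" for y n using finite_Fc[OF R LF] .
  have fings: "finite (gs n)" for n using finF by (simp add: gs_def)
  have rec: "\<forall>n. FF T x n = g n + (if L \<le> n then FF T x (n - L) else 0)"
  proof
    fix n
    have int: "Fc T x n \<inter> subtree T x1 = (if L \<le> n then Fc T x1 (n - L) else {})"
    proof (cases "L \<le> n")
      case True
      have "Fc T x n \<inter> subtree T x1 = Fc T x1 (n - L)"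
      proof
        show "Fc T x n \<inter> subtree T x1 \<subseteq> Fc T x1 (n - L)"
          using True lx by (auto simp: Fc_def L_def)
        show "Fc T x1 (n - L) \<subseteq> Fc T x n \<inter> subtree T x1"
          using True lx subtree_mono[OF x1] by (auto simp: Fc_def L_def)
      qed
      then show ?thesis using True by simp
    next
      case False
      have "Fc T x n \<inter> subtree T x1 = {}"
      proof (rule ccontr)
        assume "Fc T x n \<inter> subtree T x1 \<noteq> {}"
        then obtain v where "v \<in> Fc T x n" "v \<in> subtree T x1" by blast
        then have "length v \<le> length x + n" "length x1 \<le> length v"
          by (auto simp: Fc_def subtree_alt prefix_length_le)
        then show False using False by (simp add: L_def)
      qed
      then show ?thesis using False by simp
    qed
    have "Fc T x n = gs n \<union> (Fc T x n \<inter> subtree T x1)" by (auto simp: gs_def)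
    moreover have "gs n \<inter> (Fc T x n \<inter> subtree T x1) = {}" by (auto simp: gs_def)
    ultimately have "card (Fc T x n) = card (gs n) + card (Fc T x n \<inter> subtree T x1)"
      using fings finF by (metis card_Un_disjoint finite_Int)
    moreover have "card (Fc T x1 (n - L)) = card (Fc T x (n - L))" using iso_card[OF R iso1] .
    ultimately show "FF T x n = g n + (if L \<le> n then FF T x (n - L) else 0)"
      using int by (simp add: FF_def g_def)
  qed
  define S where "S = {s \<in> T. \<exists>k. length x \<le> k \<and> k < length x1 \<and> (\<exists>i. s = take k x1 @ [i]) \<and> \<not> prefix s x1}"
  have finS: "finite S"
  proof -
    have "S \<subseteq> (\<Union>k\<in>{length x..<length x1}. (\<lambda>i. take k x1 @ [i]) ` {i. take k x1 @ [i] \<in> T})"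
      by (auto simp: S_def)
    moreover have "finite (\<Union>k\<in>{length x..<length x1}. (\<lambda>i. take k x1 @ [i]) ` {i. take k x1 @ [i] \<in> T})"
    proof (intro finite_UN_I)
      fix k
      have "take k x1 \<in> T" using rooted_prefix[OF R x1T take_is_prefix] .
      then show "finite ((\<lambda>i. take k x1 @ [i]) ` {i. take k x1 @ [i] \<in> T})"
        using LF by (auto simp: locally_finite_def)
    qed simp
    ultimately show ?thesis using finite_subset by blast
  qed
  have Ssub: "s \<in> subtree T x" if s: "s \<in> S" for s
  proof -
    obtain k i where k: "length x \<le> k" "k < length x1" and si: "s = take k x1 @ [i]" and sT: "s \<in> T"
      using s by (auto simp: S_def)
    have "prefix x (take k x1)" using pfx_take2[OF px k(1)] .
    then show ?thesis using si sT by (auto simp: subtree_alt prefix_def)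
  qed
  have Sno: "\<forall>v\<in>subtree T s. \<not> iso T v x" if s: "s \<in> S" for s
  proof (intro ballI notI)
    fix v assume v: "v \<in> subtree T s" and vx: "iso T v x"
    obtain k i where k: "length x \<le> k" "k < length x1" and si: "s = take k x1 @ [i]"
      and np: "\<not> prefix s x1"
      using s by (auto simp: S_def)
    have ls: "length s \<le> length x1" using si k by simp
    have sv: "prefix s v" using v by (auto simp: subtree_alt)
    have vsub: "v \<in> subtree T x" using subtree_mono[OF Ssub[OF s]] v by blast
    have n1: "\<not> prefix v x1" using sv np prefix_order.trans by blast
    have n2: "\<not> prefix x1 v"
    proof
      assume "prefix x1 v"
      then have "prefix s x1 \<or> prefix x1 s" using sv prefix_same_cases by blast
      then show False using np ls pfx_aux by blast
    qed
    have "caseA T" unfolding caseA_def using xT vsub x1 n1 n2 vx iso1 by blast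
    then show False using noA by blast
  qed
  have IHS: "\<forall>s\<in>S. GoodB T s" using IH Ssub Sno by blast
  obtain ds cs Cs where bnd: "\<forall>s\<in>S. cs s > 0 \<and> (\<forall>n. cs s * (real n + 1) ^ ds s \<le> FF T s n \<and> FF T s n \<le> Cs s * (real n + 1) ^ ds s)"
    using choice3[of S "\<lambda>s d c C. c > 0 \<and> (\<forall>n. c * (real n + 1) ^ d \<le> FF T s n \<and> FF T s n \<le> C * (real n + 1) ^ d)"]
      IHS unfolding GoodB_def by blast
  have g1: "\<forall>n. 1 \<le> g n"
  proof
    fix n
    have "x \<in> gs n" using xT lx by (auto simp: gs_def Fc_def subtree_alt dest: prefix_length_le)
    then have "card (gs n) \<noteq> 0" using fings by auto
    then show "1 \<le> g n" by (simp add: g_def)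
  qed
  define P where "P = (\<lambda>k. take k x1) ` {length x..<length x1}"
  have cardP: "card P \<le> L" unfolding P_def L_def using card_image_le[of "{length x..<length x1}" "\<lambda>k. take k x1"] by simp
  have up: "\<forall>n. g n \<le> real L + (\<Sum>s\<in>S. FF T s n)"
  proof
    fix n
    have "gs n \<subseteq> P \<union> (\<Union>s\<in>S. Fc T s n)"
    proof
      fix v assume v: "v \<in> gs n"
      then have vT: "v \<in> T" and xv: "prefix x v" and vl: "length v \<le> length x + n"
        and nv: "\<not> (v \<in> subtree T x1)" by (auto simp: gs_def Fc_def subtree_alt)
      have n2: "\<not> prefix x1 v" using nv vT by (auto simp: subtree_alt)
      show "v \<in> P \<union> (\<Union>s\<in>S. Fc T s n)"
      proof (cases "prefix v x1")
        case True
        have "length v \<le> length x1" using True prefix_length_le by blast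
        moreover have "length v \<noteq> length x1" using True n2 pfx_len_eq by (metis prefix_order.refl)
        moreover have "length x \<le> length v" using xv prefix_length_le by blast
        moreover have "v = take (length v) x1" using True by (rule pfx_take)
        ultimately have "v \<in> P" unfolding P_def by auto
        then show ?thesis by blast
      next
        case False
        define k0 where "k0 = (LEAST k. take k v \<noteq> take k x1)"
        have ex: "take (length v) v \<noteq> take (length v) x1" using False take_is_prefix[of "length v" x1] by auto
        have k0v: "k0 \<le> length v" unfolding k0_def using ex by (rule Least_le)
        have ex2: "take (length x1) v \<noteq> take (length x1) x1"
          using n2 take_is_prefix[of "length x1" v] by auto
        have k0x1: "k0 \<le> length x1" unfolding k0_def using ex2 by (rule Least_le)
        have tk0: "take k0 v \<noteq> take k0 x1" unfolding k0_def using ex by (rule LeastI)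
        have below: "take k v = take k x1" if "k < k0" for k
          using not_less_Least[OF that[unfolded k0_def]] unfolding k0_def by blast
        have txv: "take (length x) v = x" using pfx_take[OF xv] by simp
        have txx: "take (length x) x1 = x" using pfx_take[OF px] by simp
        have "k0 > length x"
        proof (rule ccontr)
          assume "\<not> length x < k0"
          then have "take k0 v = take k0 (take (length x) v)" "take k0 x1 = take k0 (take (length x) x1)"
            by (simp_all add: min_def)
          then show False using tk0 txv txx by simp
        qed
        then obtain k where k0k: "k0 = Suc k" by (cases k0) auto
        have tkeq: "take k v = take k x1" using below k0k by simp
        have kv: "k < length v" using k0v k0k by simp
        define s where "s = take (Suc k) v"
        have s_eq: "s = take k x1 @ [v ! k]" using kv tkeq by (simp add: s_def take_Suc_conv_app_nth)
        have sT: "s \<in> T" using rooted_prefix[OF R vT take_is_prefix] s_def by simp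
        have nps: "\<not> prefix s x1"
        proof
          assume "prefix s x1"
          then have "s = take (length s) x1" by (rule pfx_take)
          moreover have "length s = Suc k" using kv s_def by simp
          ultimately have "s = take (Suc k) x1" by simp
          then show False using tk0 k0k s_def by simp
        qed
        have "length x \<le> k" "k < length x1" using k0k k0x1 \<open>k0 > length x\<close> by auto
        then have "s \<in> S" unfolding S_def using sT nps s_eq by blast
        moreover have "v \<in> Fc T s n"
          using vT vl kv \<open>length x \<le> k\<close> by (auto simp: Fc_def subtree_alt s_def take_is_prefix)
        ultimately show ?thesis by blast
      qed
    qed
    then have "card (gs n) \<le> card (P \<union> (\<Union>s\<in>S. Fc T s n))"
      using finS finF by (intro card_mono) (auto simp: P_def)
    also have "\<dots> \<le> card P + card (\<Union>s\<in>S. Fc T s n)" by (rule card_Un_le)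
    also have "\<dots> \<le> L + (\<Sum>s\<in>S. card (Fc T s n))" using card_UN_le[OF finS, of "\<lambda>s. Fc T s n"] cardP by linarith
    finally have "real (card (gs n)) \<le> real (L + (\<Sum>s\<in>S. card (Fc T s n)))" by linarith
    then show "g n \<le> real L + (\<Sum>s\<in>S. FF T s n)" by (simp add: FF_def g_def)
  qed
  have lo: "\<forall>s\<in>S. \<forall>n\<ge>(\<lambda>s. length s - length x) s. FF T s (n - (\<lambda>s. length s - length x) s) \<le> g n"
  proof (intro ballI allI impI)
    fix s n assume s: "s \<in> S" and n: "n \<ge> (\<lambda>s. length s - length x) s"
    obtain k i where k: "length x \<le> k" "k < length x1" and si: "s = take k x1 @ [i]"
      and np: "\<not> prefix s x1"
      using s by (auto simp: S_def)
    have ls: "length s \<le> length x1" using si k by simp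
    have xs: "prefix x s" using Ssub[OF s] by (auto simp: subtree_alt)
    have "Fc T s (n - (length s - length x)) \<subseteq> gs n"
    proof
      fix v assume v: "v \<in> Fc T s (n - (length s - length x))"
      then have vT: "v \<in> T" and sv: "prefix s v" and vl: "length v \<le> length s + (n - (length s - length x))"
        by (auto simp: Fc_def subtree_alt)
      have "length v \<le> length x + n" using vl n k si by simp
      moreover have "prefix x v" using xs sv prefix_order.trans by blast
      moreover have "\<not> prefix x1 v"
      proof
        assume "prefix x1 v"
        then have "prefix s x1 \<or> prefix x1 s" using sv prefix_same_cases by blast
        then show False using np ls pfx_aux by blast
      qed
      ultimately show "v \<in> gs n" using vT by (auto simp: gs_def Fc_def subtree_alt)
    qed
    then have "card (Fc T s (n - (length s - length x))) \<le> card (gs n)" using fings by (intro card_mono) auto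
    then show "FF T s (n - (\<lambda>s. length s - length x) s) \<le> g n" by (simp add: FF_def g_def)
  qed
  obtain c C where c: "c > 0" and gb: "\<forall>n. c * (real n + 1) ^ Max (insert 0 (ds ` S)) \<le> g n \<and> g n \<le> C * (real n + 1) ^ Max (insert 0 (ds ` S))"
    using combine[OF finS bnd g1 up lo] by blast
  show ?thesis using rec_sum[OF L1 rec c gb] unfolding GoodB_def by blast
qed


lemma growth:
  assumes R: "rooted_tree T" and LF: "locally_finite T" and P: "periodicN T N" and noA: "\<not> caseA T"
  shows "x \<in> T \<Longrightarrow> GoodB T x"
proof (induction "card (Reach T N x)" arbitrary: x rule: less_induct)
  case less
  have IHs: "\<forall>s\<in>subtree T x. (\<forall>v\<in>subtree T s. \<not> iso T v x) \<longrightarrow> GoodB T s"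
  proof (intro ballI impI)
    fix s assume s: "s \<in> subtree T x" and no: "\<forall>v\<in>subtree T s. \<not> iso T v x"
    have "card (Reach T N s) < card (Reach T N x)" using reach_less[OF R LF P less.prems s no] .
    moreover have "s \<in> T" using s by (auto simp: subtree_def)
    ultimately show "GoodB T s" using less.hyps by blast
  qed
  show ?case
  proof (cases "\<exists>x1\<in>subtree T x. x1 \<noteq> x \<and> iso T x1 x")
    case True
    then obtain x1 where "x1 \<in> subtree T x" "x1 \<noteq> x" "iso T x1 x" by blast
    then show ?thesis using rec_step[OF R LF less.prems noA _ _ _ IHs] by blast
  next
    case False
    have "\<forall>c\<in>(\<lambda>i. x @ [i]) ` {i. x @ [i] \<in> T}. GoodB T c"
    proof
      fix c assume "c \<in> (\<lambda>i. x @ [i]) ` {i. x @ [i] \<in> T}"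
      then obtain i where ci: "c = x @ [i]" "x @ [i] \<in> T" by auto
      have cs: "c \<in> subtree T x" using ci by (auto simp: subtree_def)
      have "\<forall>v\<in>subtree T c. \<not> iso T v x"
      proof (intro ballI notI)
        fix v assume v: "v \<in> subtree T c" and vx: "iso T v x"
        have "v \<in> subtree T x" using subtree_mono[OF cs] v by blast
        moreover have "v \<noteq> x" using v ci by (auto simp: subtree_def)
        ultimately show False using False vx by blast
      qed
      then show "GoodB T c" using IHs cs by blast
    qed
    then show ?thesis using nonrec_step[OF R LF less.prems] by blast
  qed
qed

lemma level_exists:
  assumes R: "rooted_tree T" and LF: "locally_finite T" and inf: "infinite T"
  shows "\<exists>v\<in>T. length v = k"
proof (rule ccontr)
  assume "\<not> ?thesis"
  then have "\<forall>v\<in>T. length v < k"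
  proof (intro ballI)
    fix v assume v: "v \<in> T" and h: "\<not> (\<exists>v\<in>T. length v = k)"
    show "length v < k"
    proof (rule ccontr)
      assume "\<not> length v < k"
      then have "length (take k v) = k" by simp
      moreover have "take k v \<in> T" using rooted_prefix[OF R v take_is_prefix] .
      ultimately show False using h by blast
    qed
  qed
  then have "T \<subseteq> ball T k" by (auto simp: ball_def)
  then show False using finite_ball[OF R LF] inf finite_subset by blast
qed

lemma ball_card_ge:
  assumes R: "rooted_tree T" and LF: "locally_finite T" and inf: "infinite T"
  shows "n + 1 \<le> card (ball T n)"
proof -
  have "{0..n} \<subseteq> length ` ball T n"
  proof
    fix k assume "k \<in> {0..n}"
    then show "k \<in> length ` ball T n" using level_exists[OF R LF inf, of k] by (force simp: ball_def)
  qed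
  then have "card {0..n} \<le> card (length ` ball T n)" using finite_ball[OF R LF] by (intro card_mono) auto
  also have "\<dots> \<le> card (ball T n)" using finite_ball[OF R LF] by (rule card_image_le)
  finally show ?thesis by simp
qed

lemma caseB_growth:
  assumes R: "rooted_tree T" and LF: "locally_finite T" and inf: "infinite T"
    and P: "periodicN T N" and noA: "\<not> caseA T"
  shows "\<exists>d::nat. d \<ge> 1 \<and> (\<exists>c C. 0 < c \<and> 0 < C \<and>
       (\<forall>n::nat. n \<ge> 1 \<longrightarrow> c \<le> real (card (ball T n)) / real n ^ d \<and>
                               real (card (ball T n)) / real n ^ d \<le> C))"
proof -
  have rT: "[] \<in> T" using R by (simp add: rooted_tree_def)
  have Fb: "Fc T [] n = ball T n" for n by (auto simp: Fc_def ball_def subtree_def)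
  obtain d c C where c: "c > 0" and b: "\<forall>n. c * (real n + 1) ^ d \<le> FF T [] n \<and> FF T [] n \<le> C * (real n + 1) ^ d"
    using growth[OF R LF P noA rT] unfolding GoodB_def by blast
  have bb: "c * (real n + 1) ^ d \<le> real (card (ball T n)) \<and> real (card (ball T n)) \<le> C * (real n + 1) ^ d" for n
    using b Fb by (simp add: FF_def)
  have ge: "real n + 1 \<le> real (card (ball T n))" for n using ball_card_ge[OF R LF inf, of n] by linarith
  have "c \<le> C" using bb[of 0] by simp
  then have C0: "C > 0" using c by simp
  have d1: "d \<ge> 1"
  proof (rule ccontr)
    assume "\<not> d \<ge> 1"
    then have "d = 0" by simp
    then have "real (card (ball T (nat \<lceil>C\<rceil>))) \<le> C" using bb[of "nat \<lceil>C\<rceil>"] by simp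
    moreover have "real (nat \<lceil>C\<rceil>) + 1 \<le> real (card (ball T (nat \<lceil>C\<rceil>)))" using ge .
    moreover have "C \<le> real (nat \<lceil>C\<rceil>)" by linarith
    ultimately show False by linarith
  qed
  have "\<forall>n::nat. n \<ge> 1 \<longrightarrow> c \<le> real (card (ball T n)) / real n ^ d \<and>
                               real (card (ball T n)) / real n ^ d \<le> C * 2 ^ d"
  proof (intro allI impI)
    fix n :: nat assume n: "n \<ge> 1"
    have np: "real n ^ d > 0" using n by simp
    have "real n ^ d \<le> (real n + 1) ^ d" by (intro power_mono) auto
    then have "c * real n ^ d \<le> real (card (ball T n))" using bb[of n] c
      by (meson mult_left_mono less_imp_le order_trans)
    then have A: "c \<le> real (card (ball T n)) / real n ^ d" using np by (simp add: le_divide_eq)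
    have "(real n + 1) ^ d \<le> (2 * real n) ^ d" using n by (intro power_mono) auto
    then have "C * (real n + 1) ^ d \<le> C * 2 ^ d * real n ^ d" using C0
      by (simp add: power_mult_distrib mult.assoc)
    then have "real (card (ball T n)) \<le> C * 2 ^ d * real n ^ d" using bb[of n] by linarith
    then have B: "real (card (ball T n)) / real n ^ d \<le> C * 2 ^ d" using np by (simp add: divide_le_eq)
    show "c \<le> real (card (ball T n)) / real n ^ d \<and> real (card (ball T n)) / real n ^ d \<le> C * 2 ^ d"
      using A B by simp
  qed
  moreover have "C * 2 ^ d > 0" using C0 by simp
  ultimately show ?thesis using d1 c by blast
qed



lemma cs_mono: "A \<subseteq> B \<Longrightarrow> cutsum l A \<le> cutsum l B"
  unfolding cutsum_def by (rule SUP_subset_mono) auto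

lemma cs_single: "e \<in> A \<Longrightarrow> ennreal (l powr (- real (length (snd e)))) \<le> cutsum l A"
  unfolding cutsum_def
proof -
  assume e: "e \<in> A"
  have "{e} \<in> {F. finite F \<and> F \<subseteq> A}" using e by auto
  then have "(\<Sum>e\<in>{e}. ennreal (l powr (- real (length (snd e))))) \<le>
    (SUP F\<in>{F. finite F \<and> F \<subseteq> A}. \<Sum>e\<in>F. ennreal (l powr (- real (length (snd e)))))"
    by (rule SUP_upper)
  then show "ennreal (l powr (- real (length (snd e)))) \<le>
    (SUP F\<in>{F. finite F \<and> F \<subseteq> A}. \<Sum>e\<in>F. ennreal (l powr (- real (length (snd e)))))" by simp
qed

lemma cs_add: assumes "A \<inter> B = {}" shows "cutsum l A + cutsum l B \<le> cutsum l (A \<union> B)"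
proof -
  define f where "f F = (\<Sum>e\<in>F. ennreal (l powr (- real (length (snd e)))))" for F :: "(vert \<times> vert) set"
  define IA where "IA = {F. finite F \<and> F \<subseteq> A}"
  define IB where "IB = {F. finite F \<and> F \<subseteq> B}"
  have neA: "IA \<noteq> {}" unfolding IA_def by auto
  have neB: "IB \<noteq> {}" unfolding IB_def by auto
  have cA: "cutsum l A = (SUP F\<in>IA. f F)" by (simp add: cutsum_def IA_def f_def)
  have cB: "cutsum l B = (SUP F\<in>IB. f F)" by (simp add: cutsum_def IB_def f_def)
  have "(SUP F\<in>IA. f F) + (SUP G\<in>IB. f G) = (SUP F\<in>IA. f F + (SUP G\<in>IB. f G))"
    using ennreal_SUP_add_left[OF neA] by simp
  also have "\<dots> = (SUP F\<in>IA. SUP G\<in>IB. f F + f G)"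
    using ennreal_SUP_add_right[OF neB] by simp
  also have "\<dots> \<le> cutsum l (A \<union> B)"
  proof (intro SUP_least)
    fix F G assume F: "F \<in> IA" and G: "G \<in> IB"
    have "F \<inter> G = {}" using F G assms by (auto simp: IA_def IB_def)
    then have "f F + f G = f (F \<union> G)" using F G unfolding f_def IA_def IB_def
      by (intro sum.union_disjoint[symmetric]) auto
    also have "\<dots> \<le> cutsum l (A \<union> B)" unfolding cutsum_def f_def
      by (rule SUP_upper) (use F G in \<open>auto simp: IA_def IB_def\<close>)
    finally show "f F + f G \<le> cutsum l (A \<union> B)" .
  qed
  finally show ?thesis using cA cB by simp
qed


lemma W_facts:
  assumes L: "L \<ge> (1::nat)" and lam: "lam = 2 powr (1 / real L)"
  shows "lam > 1" and "\<And>m m'. m \<le> m' \<Longrightarrow> lam powr (- real m') \<le> lam powr (- real m)"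
    and "\<And>m. lam powr (- real (m + L)) = lam powr (- real m) / 2"
proof -
  have "2 powr 0 < 2 powr (1 / real L)" using L by (intro powr_less_mono) auto
  then show l1: "lam > 1" using lam by simp
  show "\<And>m m'. m \<le> m' \<Longrightarrow> lam powr (- real m') \<le> lam powr (- real m)"
    using l1 by (intro powr_mono) auto
  have "lam powr real L = 2 powr (1/real L * real L)" by (simp only: lam powr_powr)
  also have "1/real L * real L = 1" using L by simp
  finally have "lam powr (real L) = 2" by simp
  then have "lam powr (- real L) = 1 / 2" by (simp add: powr_minus)
  then show "\<And>m. lam powr (- real (m + L)) = lam powr (- real m) / 2"
  proof -
    fix m
    have "lam powr (- real (m + L)) = lam powr (- real m + - real L)" by simp
    also have "\<dots> = lam powr (- real m) * lam powr (- real L)" by (rule powr_add)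
    finally show "lam powr (- real (m + L)) = lam powr (- real m) / 2"
      using \<open>lam powr (- real L) = 1 / 2\<close> by simp
  qed
qed


lemma take_prefix_eq: "prefix a b \<Longrightarrow> n \<le> length a \<Longrightarrow> take n a = take n b"
  by (auto simp: prefix_def)

lemma caseA_cut:
  assumes R: "rooted_tree T" and xT: "x \<in> T"
    and y1: "y1 \<in> subtree T x" and y2: "y2 \<in> subtree T x"
    and n12: "\<not> prefix y1 y2" and n21: "\<not> prefix y2 y1"
    and i1: "iso T y1 x" and i2: "iso T y2 x"
    and L: "L \<ge> 1" and Ly1: "length y1 \<le> length x + L" and Ly2: "length y2 \<le> length x + L"
    and lam: "lam = 2 powr (1 / real L)"
    and pi: "\<pi> \<in> cutsets T"
  shows "ennreal ((1/2) * lam powr (- real (length x))) \<le> cutsum lam \<pi>"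
proof (rule ccontr)
  assume "\<not> ?thesis"
  then have small: "cutsum lam \<pi> < ennreal ((1/2) * lam powr (- real (length x)))" by simp
  note Wf = W_facts[OF L lam]
  have lam1: "lam > 1" by (rule Wf(1))
  have Wmono: "lam powr (- real m') \<le> lam powr (- real m)" if "m \<le> m'" for m m' using Wf(2) that .
  have WL: "lam powr (- real (m + L)) = lam powr (- real m) / 2" for m using Wf(3) .
  have Wpos: "lam powr (- real m) > 0" for m using lam1 by simp
  define below where "below v = {e \<in> \<pi>. prefix v (fst e)}" for v
  define Bad where "Bad v \<longleftrightarrow> v \<in> T \<and> iso T v x \<and> cutsum lam (below v) < ennreal ((1/2) * lam powr (- real (length v)))" for v
  have belowsub: "below v \<subseteq> \<pi>" for v by (auto simp: below_def)
  have nopath: "(take k w, take (Suc k) w) \<notin> \<pi>"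
    if bv: "Bad v" and w: "w \<in> subtree T v" and lw: "length w \<le> length v + L" and k: "length v \<le> k" "k < length w" for v w k
  proof
    assume ein: "(take k w, take (Suc k) w) \<in> \<pi>"
    have "prefix v (take k w)" using pfx_take2[of v w k] w k by (auto simp: subtree_alt)
    then have "(take k w, take (Suc k) w) \<in> below v" using ein by (auto simp: below_def)
    then have "ennreal (lam powr (- real (length (take (Suc k) w)))) \<le> cutsum lam (below v)"
      using cs_single by fastforce
    moreover have "length (take (Suc k) w) = Suc k" using k by simp
    moreover have "lam powr (- real (length v + L)) \<le> lam powr (- real (Suc k))"
      using k lw by (intro Wmono) auto
    ultimately have "ennreal (lam powr (- real (length v)) / 2) \<le> cutsum lam (below v)"
      using WL by (metis ennreal_leI order_trans)
    then show False using bv unfolding Bad_def by (simp add: not_less[symmetric])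
  qed
  have step: "\<exists>w. w \<in> subtree T v \<and> length v < length w \<and> Bad w \<and>
      (\<forall>k. length v \<le> k \<and> k < length w \<longrightarrow> (take k w, take (Suc k) w) \<notin> \<pi>)" if bv: "Bad v" for v
  proof -
    have vT: "v \<in> T" and ivx: "iso T v x" using bv by (auto simp: Bad_def)
    obtain \<phi> where I: "isoT T x v \<phi>" using iso_sym[OF R ivx] by (auto simp: iso_def)
    have bij: "bij_betw \<phi> (subtree T x) (subtree T v)" using I by (simp add: isoT_def)
    have props: "\<phi> y \<in> subtree T v \<and> length v < length (\<phi> y) \<and> length (\<phi> y) \<le> length v + L \<and> iso T (\<phi> y) x"
      if y: "y \<in> subtree T x" and yx: "y \<noteq> x" and iy: "iso T y x" and Ly: "length y \<le> length x + L" for y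
    proof -
      have l: "\<phi> y \<in> subtree T v \<and> length (\<phi> y) + length x = length y + length v" using isoT_len[OF R I y] .
      have "length x \<noteq> length y" using y yx pfx_len_eq by (auto simp: subtree_alt)
      moreover have "length x \<le> length y" using y by (auto simp: subtree_alt prefix_length_le)
      ultimately have "length x < length y" by simp
      moreover have "iso T y (\<phi> y)" using isoT_restrict[OF R I y] y by (auto simp: iso_def subtree_def)
      ultimately show ?thesis using l Ly iso_trans[OF iso_sym[OF R] iy] by auto
    qed
    have y1x: "y1 \<noteq> x" using n12 y2 by (auto simp: subtree_alt)
    have y2x: "y2 \<noteq> x" using n21 y1 by (auto simp: subtree_alt)
    note p1 = props[OF y1 y1x i1 Ly1] and p2 = props[OF y2 y2x i2 Ly2]
    have np1: "\<not> prefix (\<phi> y1) (\<phi> y2)" using isoT_reflect[OF R I y1 y2] n12 by blast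
    have np2: "\<not> prefix (\<phi> y2) (\<phi> y1)" using isoT_reflect[OF R I y2 y1] n21 by blast
    have path: "\<forall>k. length v \<le> k \<and> k < length (\<phi> y) \<longrightarrow> (take k (\<phi> y), take (Suc k) (\<phi> y)) \<notin> \<pi>"
      if "\<phi> y \<in> subtree T v \<and> length v < length (\<phi> y) \<and> length (\<phi> y) \<le> length v + L \<and> iso T (\<phi> y) x" for y
      using nopath[OF bv] that by blast
    have sub_in: "\<phi> y \<in> T" if "\<phi> y \<in> subtree T v \<and> length v < length (\<phi> y) \<and> length (\<phi> y) \<le> length v + L \<and> iso T (\<phi> y) x" for y
      using that by (auto simp: subtree_def)
    show ?thesis
    proof (cases "Bad (\<phi> y1)")
      case True then show ?thesis using p1 path[OF p1] by blast
    next
      case nb1: False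
      show ?thesis
      proof (cases "Bad (\<phi> y2)")
        case True then show ?thesis using p2 path[OF p2] by blast
      next
        case nb2: False
        have ge: "ennreal (lam powr (- real (length v)) / 4) \<le> cutsum lam (below (\<phi> y))"
          if p: "\<phi> y \<in> subtree T v \<and> length v < length (\<phi> y) \<and> length (\<phi> y) \<le> length v + L \<and> iso T (\<phi> y) x"
          and nb: "\<not> Bad (\<phi> y)" for y
        proof -
          have "ennreal ((1/2) * lam powr (- real (length (\<phi> y)))) \<le> cutsum lam (below (\<phi> y))"
            using nb sub_in[OF p] p unfolding Bad_def by (simp add: not_less)
          moreover have "lam powr (- real (length v + L)) \<le> lam powr (- real (length (\<phi> y)))"
            using p by (intro Wmono) auto
          then have "lam powr (- real (length v)) / 4 \<le> (1/2) * lam powr (- real (length (\<phi> y)))"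
            using WL[of "length v"] by simp
          ultimately show ?thesis by (meson ennreal_leI order_trans)
        qed
        have disj: "below (\<phi> y1) \<inter> below (\<phi> y2) = {}"
          using np1 np2 prefix_same_cases by (fastforce simp: below_def)
        have sub: "below (\<phi> y1) \<union> below (\<phi> y2) \<subseteq> below v"
          using p1 p2 by (auto simp: below_def subtree_alt intro: prefix_order.trans)
        have "ennreal (lam powr (- real (length v)) / 4) + ennreal (lam powr (- real (length v)) / 4)
              \<le> cutsum lam (below (\<phi> y1)) + cutsum lam (below (\<phi> y2))"
          using ge[OF p1 nb1] ge[OF p2 nb2] by (rule add_mono)
        also have "\<dots> \<le> cutsum lam (below (\<phi> y1) \<union> below (\<phi> y2))" using cs_add[OF disj] .
        also have "\<dots> \<le> cutsum lam (below v)" using cs_mono[OF sub] .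
        finally have "ennreal ((1/2) * lam powr (- real (length v))) \<le> cutsum lam (below v)"
          using Wpos[of "length v"] by (simp add: ennreal_plus[symmetric] del: ennreal_plus)
        then show ?thesis using bv unfolding Bad_def by (simp add: not_less[symmetric])
      qed
    qed
  qed
  have init: "(take k x, take (Suc k) x) \<notin> \<pi>" if k: "k < length x" for k
  proof
    assume "(take k x, take (Suc k) x) \<in> \<pi>"
    then have "ennreal (lam powr (- real (length (take (Suc k) x)))) \<le> cutsum lam \<pi>"
      using cs_single by fastforce
    moreover have "lam powr (- real (length x)) \<le> lam powr (- real (length (take (Suc k) x)))"
      using k by (intro Wmono) auto
    moreover have "(1/2) * lam powr (- real (length x)) \<le> lam powr (- real (length x))" using Wpos[of "length x"] by simp
    ultimately have "ennreal ((1/2) * lam powr (- real (length x))) \<le> cutsum lam \<pi>"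
      by (meson ennreal_leI order_trans)
    then show False using small by simp
  qed
  have bx: "Bad x"
  proof -
    have "cutsum lam (below x) \<le> cutsum lam \<pi>" using cs_mono[OF belowsub] .
    then show ?thesis using small xT iso_refl[OF xT] unfolding Bad_def by (meson order_le_less_trans)
  qed
  obtain nxt where nxt: "\<And>v. Bad v \<Longrightarrow> nxt v \<in> subtree T v \<and> length v < length (nxt v) \<and> Bad (nxt v) \<and>
      (\<forall>k. length v \<le> k \<and> k < length (nxt v) \<longrightarrow> (take k (nxt v), take (Suc k) (nxt v)) \<notin> \<pi>)"
    using step by metis
  define sq where "sq n = (nxt ^^ n) x" for n
  have sqS: "sq (Suc n) = nxt (sq n)" for n by (simp add: sq_def)
  have bad: "Bad (sq n)" for n by (induction n) (auto simp: sq_def bx dest: nxt)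
  have sqT: "sq n \<in> T" for n using bad by (simp add: Bad_def)
  have pre1: "prefix (sq n) (sq (Suc n))" for n using nxt[OF bad[of n]] sqS by (auto simp: subtree_alt)
  have len1: "length (sq n) < length (sq (Suc n))" for n using nxt[OF bad[of n]] sqS by auto
  have lenx: "length x + n \<le> length (sq n)" for n
  proof (induction n)
    case 0 then show ?case by (simp add: sq_def)
  next
    case (Suc n) then show ?case using len1[of n] by simp
  qed
  have chain: "m \<le> n \<Longrightarrow> prefix (sq m) (sq n)" for m n
  proof (induction n)
    case 0 then show ?case by simp
  next
    case (Suc n) then show ?case using pre1[of n] by (metis le_Suc_eq prefix_order.trans prefix_order.refl)
  qed
  define p where "p n = take n (sq n)" for n
  have tk: "take n (sq m) = p n" if "n \<le> length (sq m)" for n m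
  proof (cases "m \<le> n")
    case True
    then show ?thesis using take_prefix_eq[OF chain[OF True] that] by (simp add: p_def)
  next
    case False
    have "n \<le> length (sq n)" using lenx[of n] by simp
    then show ?thesis using take_prefix_eq[OF chain[of n m]] False by (simp add: p_def)
  qed
  have ray: "ray T p"
    unfolding ray_def
  proof (intro conjI allI)
    show "p 0 = []" by (simp add: p_def)
  next
    fix n
    have l: "Suc n \<le> length (sq (Suc n))" using lenx[of "Suc n"] by simp
    show "p (Suc n) \<in> T" using rooted_prefix[OF R sqT take_is_prefix] by (simp add: p_def)
    have "p (Suc n) = take n (sq (Suc n)) @ [sq (Suc n) ! n]"
      using l by (simp add: p_def take_Suc_conv_app_nth)
    moreover have "take n (sq (Suc n)) = p n" using tk l by simp
    ultimately show "\<exists>i. p (Suc n) = p n @ [i]" by simp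
  qed
  obtain n where en: "(p n, p (Suc n)) \<in> \<pi>" using pi ray by (auto simp: cutsets_def)
  show False
  proof (cases "n < length x")
    case True
    have "take n x = p n" "take (Suc n) x = p (Suc n)" using tk[of n 0] tk[of "Suc n" 0] True
      by (simp_all add: sq_def)
    then show False using init[OF True] en by simp
  next
    case False
    have ex: "\<exists>k. length (sq k) \<le> n \<and> n < length (sq (Suc k))" if "n < length (sq m)" for m
      using that
    proof (induction m)
      case 0 then show ?case using False by (simp add: sq_def)
    next
      case (Suc m)
      then show ?case by (cases "n < length (sq m)") (auto simp: not_less)
    qed
    obtain k where k: "length (sq k) \<le> n" "n < length (sq (Suc k))"
      using ex[of "Suc n"] lenx[of "Suc n"] by auto
    have "p n = take n (sq (Suc k))" "p (Suc n) = take (Suc n) (sq (Suc k))"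
      using tk[of n "Suc k"] tk[of "Suc n" "Suc k"] k by simp_all
    moreover have "(take n (sq (Suc k)), take (Suc n) (sq (Suc k))) \<notin> \<pi>"
      using nxt[OF bad[of k]] k sqS by auto
    ultimately show False using en by simp
  qed
qed



lemma caseA_br:
  assumes R: "rooted_tree T" and A: "caseA T"
  shows "branching_number T > 1"
proof -
  obtain x y1 y2 where xT: "x \<in> T" and y1: "y1 \<in> subtree T x" and y2: "y2 \<in> subtree T x"
    and n12: "\<not> prefix y1 y2" and n21: "\<not> prefix y2 y1" and i1: "iso T y1 x" and i2: "iso T y2 x"
    using A unfolding caseA_def by blast
  define L where "L = max (length y1) (length y2) - length x"
  have "y1 \<noteq> x" using n12 y2 by (auto simp: subtree_alt)
  then have "length x < length y1" using y1 pfx_len_eq prefix_length_le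
    by (auto simp: subtree_alt order_le_less)
  then have L: "L \<ge> 1" by (simp add: L_def)
  have Ly1: "length y1 \<le> length x + L" and Ly2: "length y2 \<le> length x + L"
    using \<open>length x < length y1\<close> by (auto simp: L_def)
  define lam where "lam = 2 powr (1 / real L)"
  have lam1: "lam > 1" using W_facts(1)[OF L lam_def] .
  define \<delta> where "\<delta> = (1/2) * lam powr (- real (length x))"
  have dpos: "\<delta> > 0" using lam1 by (simp add: \<delta>_def)
  have "ennreal \<delta> \<le> (INF \<pi>\<in>cutsets T. cutsum lam \<pi>)"
    using caseA_cut[OF R xT y1 y2 n12 n21 i1 i2 L Ly1 Ly2 lam_def] unfolding \<delta>_def
    by (intro INF_greatest) blast
  moreover have "0 < ennreal \<delta>" using dpos by simp
  ultimately have "(INF \<pi>\<in>cutsets T. cutsum lam \<pi>) > 0" by (rule order.strict_trans2[rotated])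
  then have "ereal lam \<in> {ereal lam | lam. lam > 0 \<and> (INF \<pi>\<in>cutsets T. cutsum lam \<pi>) > 0}"
    using lam1 by auto
  then have "ereal lam \<le> branching_number T" unfolding branching_number_def by (rule Sup_upper)
  moreover have "ereal 1 < ereal lam" using lam1 by simp
  ultimately show ?thesis by (metis one_ereal_def order_less_le_trans)
qed

theorem proposition3p1:
  fixes T :: "nat list set"
  assumes "rooted_tree T" and "locally_finite T" and "infinite T" and "periodic T"
  shows "branching_number T > 1 \<or>
    (\<exists>d::nat. d \<ge> 1 \<and> (\<exists>c C. 0 < c \<and> 0 < C \<and>
       (\<forall>n::nat. n \<ge> 1 \<longrightarrow> c \<le> real (card (ball T n)) / real n ^ d \<and>
                               real (card (ball T n)) / real n ^ d \<le> C)))"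
proof (cases "caseA T")
  case True then show ?thesis using caseA_br[OF assms(1)] by blast
next
  case False
  obtain N where "periodicN T N" using assms(4) by (auto simp: periodic_def)
  then show ?thesis using caseB_growth[OF assms(1,2,3) _ False] by blast
qed

end
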